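(* Let $k_0\ge 0$ and $c\in\mathbb{R}$ with $|c|<\sqrt{1+k_0^2}$. The circles in $\mathbb{S}^2$ of constant geodesic curvature $k_0$ which are not parallels (i.e. not of the form $\{z=\text{const}\}$) are the only arc-length parametrized spherical curves $\xi=(x,y,z)$ (up to rotations around the $z$-axis) whose spherical angular momentum, as a function of $z$, is $\mathcal K(z)=k_0z+c$.
   Context: For an arc-length parametrized curve $\xi=(x,y,z)$ in the unit sphere $\mathbb{S}^2\subset\mathbb{R}^3$, its spherical angular momentum is $\mathcal K=\dot x\,y-x\,\dot y=-\det(\xi,\dot\xi,(0,0,1))$, where the dot denotes the derivative with respect to arc length; its geodesic curvature is $\kappa=\det(\xi,\dot\xi,\ddot\xi)$. *)

theory Defs
  imports "HOL-Analysis.Analysis"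
begin

text \<open>Points of R^3 are modelled as real^3 with coordinates x = p$1, y = p$2, z = p$3.\<close>

definition sph_ang_mom :: "real^3 \<Rightarrow> real^3 \<Rightarrow> real" where
  "sph_ang_mom p v = v$1 * p$2 - p$1 * v$2"

definition geod_curv :: "real^3 \<Rightarrow> real^3 \<Rightarrow> real^3 \<Rightarrow> real" where
  "geod_curv p v a = det (vector [p, v, a] :: real^3^3)"

end

theory Submission
  imports Defs
begin

unbundle cross3_syntax

lemma bb_cross: "bounded_bilinear cross3"
proof
  fix a a' b b' :: "real^3" and r :: real
  show "(a + a') \<times> b = a \<times> b + a' \<times> b" by (rule cross_add_left)
  show "a \<times> (b + b') = a \<times> b + a \<times> b'" by (rule cross_add_right)
  show "(r *\<^sub>R a) \<times> b = r *\<^sub>R (a \<times> b)" by (rule cross_mult_left)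
  show "a \<times> (r *\<^sub>R b) = r *\<^sub>R (a \<times> b)" by (rule cross_mult_right)
next
  show "\<exists>K. \<forall>a b::real^3. norm (a \<times> b) \<le> norm a * norm b * K"
  proof (intro exI allI)
    fix a b :: "real^3"
    have "(norm (a \<times> b))\<^sup>2 \<le> (norm a * norm b)\<^sup>2"
      using norm_cross_dot[of a b] zero_le_power2[of "a \<bullet> b"] by linarith
    then show "norm (a \<times> b) \<le> norm a * norm b * 1"
      by (simp add: power2_le_iff_abs_le)
  qed
qed

lemma deriv_zero_on_open:
  fixes f :: "real \<Rightarrow> 'b::real_normed_vector"
  assumes "open S" "t \<in> S" "\<And>s. s \<in> S \<Longrightarrow> f s = c" "(f has_vector_derivative D) (at t)"
  shows "D = 0"
proof -
  have h: "((\<lambda>_. c) has_vector_derivative 0) (at t)" by simp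
  have "(f has_vector_derivative 0) (at t)"
    using h assms(1,2) by (rule has_vector_derivative_transform_within_open) (simp add: assms(3))
  from vector_derivative_unique_at[OF assms(4) this] show ?thesis .
qed

lemma key_cross:
  fixes x v w :: "real^3"
  assumes "v \<bullet> v = 1" "x \<bullet> v = 0" "v \<bullet> w = 0"
  shows "x \<times> w = - (x \<bullet> (v \<times> w)) *\<^sub>R v"
proof -
  let ?u = "x \<times> w"
  have "v \<times> ?u = (v \<bullet> w) *\<^sub>R x - (v \<bullet> x) *\<^sub>R w" by (rule Lagrange)
  then have 1: "v \<times> ?u = 0" using assms by (simp add: inner_commute)
  have L: "v \<times> (v \<times> ?u) = (v \<bullet> ?u) *\<^sub>R v - (v \<bullet> v) *\<^sub>R ?u" by (rule Lagrange)
  have "(v \<bullet> ?u) *\<^sub>R v - ?u = (v \<bullet> ?u) *\<^sub>R v - (v \<bullet> v) *\<^sub>R ?u" using assms(1) by simp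
  also have "\<dots> = v \<times> (v \<times> ?u)" by (rule L[symmetric])
  also have "\<dots> = 0" by (simp only: 1 cross_zero_right)
  finally have "(v \<bullet> ?u) *\<^sub>R v = ?u" by (rule right_minus_eq[THEN iffD1])
  then have 2: "?u = (v \<bullet> ?u) *\<^sub>R v" by (rule sym)
  have 3: "v \<bullet> ?u = - (x \<bullet> (v \<times> w))"
    by (simp add: cross3_simps)
  have "?u = (v \<bullet> ?u) *\<^sub>R v" by (rule 2)
  also have "\<dots> = - (x \<bullet> (v \<times> w)) *\<^sub>R v" by (simp only: 3)
  finally show ?thesis .
qed


theorem corollary3p4:
  fixes k0 c a b :: real
    and \<xi> \<xi>' \<xi>'' :: "real \<Rightarrow> real^3"
  assumes k0: "k0 \<ge> 0"
    and c: "\<bar>c\<bar> < sqrt (1 + k0\<^sup>2)"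
    and ab: "a < b"
    and d1: "\<forall>t\<in>{a<..<b}. (\<xi> has_vector_derivative \<xi>' t) (at t)"
    and d2: "\<forall>t\<in>{a<..<b}. (\<xi>' has_vector_derivative \<xi>'' t) (at t)"
    and cont2: "continuous_on {a<..<b} \<xi>''"
    and sphere: "\<forall>t\<in>{a<..<b}. norm (\<xi> t) = 1"
    and arclength: "\<forall>t\<in>{a<..<b}. norm (\<xi>' t) = 1"
    and nonparallel: "\<forall>u v. a \<le> u \<and> u < v \<and> v \<le> b \<longrightarrow>
                        (\<exists>s\<in>{u<..<v}. \<exists>t\<in>{u<..<v}. \<xi> s $ 3 \<noteq> \<xi> t $ 3)"
  shows "((\<forall>t\<in>{a<..<b}. sph_ang_mom (\<xi> t) (\<xi>' t) = k0 * \<xi> t $ 3 + c) \<longrightarrow>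
            (\<forall>t\<in>{a<..<b}. geod_curv (\<xi> t) (\<xi>' t) (\<xi>'' t) = k0) \<and>
            (\<exists>n::real^3. norm n = 1 \<and> n $ 3 = - c / sqrt (1 + k0\<^sup>2) \<and>
               (\<forall>t\<in>{a<..<b}. \<xi> t \<bullet> n = k0 / sqrt (1 + k0\<^sup>2))))
       \<and> (((\<forall>t\<in>{a<..<b}. geod_curv (\<xi> t) (\<xi>' t) (\<xi>'' t) = k0) \<and>
            (\<exists>n::real^3. norm n = 1 \<and> \<bar>n $ 3\<bar> < 1 \<and>
               (\<forall>t\<in>{a<..<b}. \<xi> t \<bullet> n = k0 / sqrt (1 + k0\<^sup>2))))
          \<longrightarrow> (\<exists>c'. \<bar>c'\<bar> < sqrt (1 + k0\<^sup>2) \<and>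
                   (\<forall>t\<in>{a<..<b}. sph_ang_mom (\<xi> t) (\<xi>' t) = k0 * \<xi> t $ 3 + c')))"
  proof -
  let ?S = "{a<..<b}"
  define s where "s = sqrt (1 + k0\<^sup>2)"
  have s0: "s > 0" unfolding s_def by (simp add: add_pos_nonneg)
  have ss: "s * s = 1 + k0\<^sup>2" unfolding s_def by (simp add: add_nonneg_nonneg)
  have oS: "open ?S" by simp
  define \<kappa> where "\<kappa> t = \<xi> t \<bullet> (\<xi>' t \<times> \<xi>'' t)" for t
  have geo: "geod_curv (\<xi> t) (\<xi>' t) (\<xi>'' t) = \<kappa> t" for t
    unfolding geod_curv_def \<kappa>_def by (rule dot_cross_det[symmetric])
  define m where "m t = k0 *\<^sub>R \<xi> t + \<xi> t \<times> \<xi>' t" for t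
  have Kform: "sph_ang_mom (\<xi> t) (\<xi>' t) = k0 * \<xi> t $ 3 - m t $ 3" for t
    unfolding m_def sph_ang_mom_def by (simp add: cross_components)
  have d1t: "(\<xi> has_vector_derivative \<xi>' t) (at t)" if "t \<in> ?S" for t
    using d1 that by blast
  have d2t: "(\<xi>' has_vector_derivative \<xi>'' t) (at t)" if "t \<in> ?S" for t
    using d2 that by blast
  have xx: "\<xi> t \<bullet> \<xi> t = 1" if "t \<in> ?S" for t
  proof -
    have "norm (\<xi> t) = 1" using sphere that by blast
    then show ?thesis by (simp add: norm_eq_1)
  qed
  have vv: "\<xi>' t \<bullet> \<xi>' t = 1" if "t \<in> ?S" for t
  proof -
    have "norm (\<xi>' t) = 1" using arclength that by blast
    then show ?thesis by (simp add: norm_eq_1)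
  qed
  have xv: "\<xi> t \<bullet> \<xi>' t = 0" if t: "t \<in> ?S" for t
  proof -
    have hd: "((\<lambda>t. \<xi> t \<bullet> \<xi> t) has_vector_derivative (\<xi> t \<bullet> \<xi>' t + \<xi>' t \<bullet> \<xi> t)) (at t)"
      by (rule bounded_bilinear.has_vector_derivative[OF bounded_bilinear_inner d1t[OF t] d1t[OF t]])
    have "\<xi> t \<bullet> \<xi>' t + \<xi>' t \<bullet> \<xi> t = 0"
      by (rule deriv_zero_on_open[OF oS t _ hd, where c=1]) (rule xx)
    then show ?thesis by (simp add: inner_commute)
  qed
  have xw: "\<xi> t \<bullet> \<xi>'' t = -1" if t: "t \<in> ?S" for t
  proof -
    have hd: "((\<lambda>t. \<xi> t \<bullet> \<xi>' t) has_vector_derivative (\<xi> t \<bullet> \<xi>'' t + \<xi>' t \<bullet> \<xi>' t)) (at t)"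
      by (rule bounded_bilinear.has_vector_derivative[OF bounded_bilinear_inner d1t[OF t] d2t[OF t]])
    have "\<xi> t \<bullet> \<xi>'' t + \<xi>' t \<bullet> \<xi>' t = 0"
      by (rule deriv_zero_on_open[OF oS t _ hd, where c=0]) (rule xv)
    then show ?thesis using vv[OF t] by simp
  qed
  have vw: "\<xi>' t \<bullet> \<xi>'' t = 0" if t: "t \<in> ?S" for t
  proof -
    have hd: "((\<lambda>t. \<xi>' t \<bullet> \<xi>' t) has_vector_derivative (\<xi>' t \<bullet> \<xi>'' t + \<xi>'' t \<bullet> \<xi>' t)) (at t)"
      by (rule bounded_bilinear.has_vector_derivative[OF bounded_bilinear_inner d2t[OF t] d2t[OF t]])
    have "\<xi>' t \<bullet> \<xi>'' t + \<xi>'' t \<bullet> \<xi>' t = 0"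
      by (rule deriv_zero_on_open[OF oS t _ hd, where c=1]) (rule vv)
    then show ?thesis by (simp add: inner_commute)
  qed
  have hm: "(m has_vector_derivative ((k0 - \<kappa> t) *\<^sub>R \<xi>' t)) (at t)" if t: "t \<in> ?S" for t
  proof -
    have h1: "((\<lambda>t. k0 *\<^sub>R \<xi> t) has_vector_derivative k0 *\<^sub>R \<xi>' t) (at t)"
      by (rule bounded_linear.has_vector_derivative[OF bounded_linear_scaleR_right d1t[OF t]])
    have h2: "((\<lambda>t. \<xi> t \<times> \<xi>' t) has_vector_derivative (\<xi> t \<times> \<xi>'' t + \<xi>' t \<times> \<xi>' t)) (at t)"
      by (rule bounded_bilinear.has_vector_derivative[OF bb_cross d1t[OF t] d2t[OF t]])
    have "(m has_vector_derivative (k0 *\<^sub>R \<xi>' t + (\<xi> t \<times> \<xi>'' t + \<xi>' t \<times> \<xi>' t))) (at t)"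
      unfolding m_def[abs_def] by (rule has_vector_derivative_add[OF h1 h2])
    moreover have "\<xi> t \<times> \<xi>'' t = - \<kappa> t *\<^sub>R \<xi>' t"
      unfolding \<kappa>_def by (rule key_cross) (use vv xv vw t in auto)
    ultimately show ?thesis by (simp add: algebra_simps)
  qed
  have mm: "m t \<bullet> m t = 1 + k0\<^sup>2" if t: "t \<in> ?S" for t
  proof -
    have "(\<xi> t \<times> \<xi>' t) \<bullet> (\<xi> t \<times> \<xi>' t) = 1"
      using dot_cross[of "\<xi> t" "\<xi>' t" "\<xi> t" "\<xi>' t"] xx[OF t] vv[OF t] xv[OF t] by (simp add: inner_commute)
    then show ?thesis unfolding m_def
      using xx[OF t] dot_cross_self(1)[of "\<xi> t" "\<xi>' t"]
      by (simp add: inner_add_left inner_add_right inner_commute power2_eq_square)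
  qed
  have xm: "\<xi> t \<bullet> m t = k0" if t: "t \<in> ?S" for t
    unfolding m_def using xx[OF t] dot_cross_self(1)[of "\<xi> t" "\<xi>' t"] by (simp add: inner_add_right)
  have mconst: "\<exists>c0. \<forall>t\<in>?S. m t = c0" if kk: "\<forall>t\<in>?S. \<kappa> t = k0"
  proof -
    obtain c0 where "\<And>t. t \<in> ?S \<Longrightarrow> m t = c0"
    proof (rule has_vector_derivative_zero_constant[of ?S m])
      fix t assume t: "t \<in> ?S"
      show "(m has_vector_derivative 0) (at t within ?S)"
        using hm[OF t] kk t by (auto intro: has_vector_derivative_at_within)
    qed auto
    then show ?thesis by blast
  qed
  have zconst_false: False if uv: "a \<le> u" "u < v" "v \<le> b" and zc: "\<forall>t\<in>{u<..<v}. \<xi> t $ 3 = z0" for u v z0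
  proof -
    obtain s1 t1 where "s1 \<in> {u<..<v}" "t1 \<in> {u<..<v}" "\<xi> s1 $ 3 \<noteq> \<xi> t1 $ 3"
      using nonparallel uv by blast
    then show False using zc by simp
  qed
  have tmid: "(a + b) / 2 \<in> ?S" using ab by auto
  have part1: "(\<forall>t\<in>?S. \<kappa> t = k0) \<and>
            (\<exists>n::real^3. norm n = 1 \<and> n $ 3 = - c / s \<and> (\<forall>t\<in>?S. \<xi> t \<bullet> n = k0 / s))"
    if HK: "\<forall>t\<in>?S. sph_ang_mom (\<xi> t) (\<xi>' t) = k0 * \<xi> t $ 3 + c"
  proof -
    have m3: "m t $ 3 = - c" if "t \<in> ?S" for t using HK Kform[of t] that by auto
    have prod0: "(k0 - \<kappa> t) * \<xi>' t $ 3 = 0" if t: "t \<in> ?S" for t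
    proof -
      have hd: "((\<lambda>t. m t $ 3) has_vector_derivative ((k0 - \<kappa> t) *\<^sub>R \<xi>' t) $ 3) (at t)"
        using bounded_linear.has_vector_derivative[OF bounded_linear_vec_nth hm[OF t]] .
      have "((k0 - \<kappa> t) *\<^sub>R \<xi>' t) $ 3 = 0"
        by (rule deriv_zero_on_open[OF oS t _ hd, where c="-c"]) (rule m3)
      then show ?thesis by simp
    qed
    have cont\<xi>: "continuous_on ?S \<xi>"
      by (rule continuous_at_imp_continuous_on) (use has_vector_derivative_continuous[OF d1t] in blast)
    have cont\<xi>': "continuous_on ?S \<xi>'"
      by (rule continuous_at_imp_continuous_on) (use has_vector_derivative_continuous[OF d2t] in blast)
    have cont\<kappa>: "continuous_on ?S \<kappa>"
      unfolding \<kappa>_def[abs_def]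
      by (intro continuous_on_inner continuous_on_cross cont\<xi> cont\<xi>' cont2)
    have kk: "\<forall>t\<in>?S. \<kappa> t = k0"
    proof (rule ccontr)
      assume "\<not> ?thesis"
      then obtain t0 where t0: "t0 \<in> ?S" "\<kappa> t0 \<noteq> k0" by blast
      have "isCont \<kappa> t0" using cont\<kappa> t0 continuous_on_eq_continuous_at[OF oS] by blast
      then obtain e where e: "e > 0" "\<forall>y. dist t0 y < e \<longrightarrow> \<kappa> y \<noteq> k0"
        using continuous_at_avoid t0(2) by blast
      define e' where "e' = min e (min (t0 - a) (b - t0))"
      have e'0: "e' > 0" using e t0 unfolding e'_def by auto
      have e1: "e' \<le> e" "e' \<le> t0 - a" "e' \<le> b - t0" unfolding e'_def by auto
      have sub: "t \<in> ?S" "\<kappa> t \<noteq> k0" if tt: "t \<in> {t0 - e'<..<t0 + e'}" for t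
      proof -
        have "t0 - e' < t" "t < t0 + e'" using tt by auto
        then have "dist t0 t < e" using e1 by (simp add: dist_real_def abs_less_iff)
        then show "\<kappa> t \<noteq> k0" using e by blast
        show "t \<in> ?S" using e1 \<open>t0 - e' < t\<close> \<open>t < t0 + e'\<close> by auto
      qed
      have zero3: "\<xi>' t $ 3 = 0" if "t \<in> {t0 - e'<..<t0 + e'}" for t
        using prod0[OF sub(1)[OF that]] sub(2)[OF that] by simp
      obtain z0 where "\<And>t. t \<in> {t0 - e'<..<t0 + e'} \<Longrightarrow> \<xi> t $ 3 = z0"
      proof (rule has_vector_derivative_zero_constant[of "{t0 - e'<..<t0 + e'}" "\<lambda>t. \<xi> t $ 3"])
        fix t assume t: "t \<in> {t0 - e'<..<t0 + e'}"
        have hd: "((\<lambda>t. \<xi> t $ 3) has_vector_derivative \<xi>' t $ 3) (at t)"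
          by (rule bounded_linear.has_vector_derivative[OF bounded_linear_vec_nth d1t[OF sub(1)[OF t]]])
        then show "((\<lambda>t. \<xi> t $ 3) has_vector_derivative 0) (at t within {t0 - e'<..<t0 + e'})"
          using zero3[OF t] by (auto intro: has_vector_derivative_at_within)
      qed auto
      then show False
        using zconst_false[of "t0 - e'" "t0 + e'" z0] e'0 e1 by auto
    qed
    obtain c0 where c0: "\<forall>t\<in>?S. m t = c0" using mconst[OF kk] by blast
    define n where "n = (1 / s) *\<^sub>R c0"
    have "c0 \<bullet> c0 = s * s" using mm[OF tmid] c0 tmid ss by auto
    then have nc0: "norm c0 = s" using s0
      by (simp add: norm_eq_sqrt_inner)
    have "norm n = 1" unfolding n_def using nc0 s0 by simp
    moreover have "n $ 3 = - c / s" unfolding n_def using m3[OF tmid] c0 tmid by simp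
    moreover have "\<forall>t\<in>?S. \<xi> t \<bullet> n = k0 / s" unfolding n_def using xm c0 by simp
    ultimately show ?thesis using kk by blast
  qed
  have part2: "\<exists>c'. \<bar>c'\<bar> < s \<and> (\<forall>t\<in>?S. sph_ang_mom (\<xi> t) (\<xi>' t) = k0 * \<xi> t $ 3 + c')"
    if kk: "\<forall>t\<in>?S. \<kappa> t = k0"
  proof -
    obtain c0 where c0: "\<forall>t\<in>?S. m t = c0" using mconst[OF kk] by blast
    have cc: "c0 \<bullet> c0 = s * s" using mm[OF tmid] c0 tmid ss by auto
    then have nc0: "norm c0 = s" using s0
      by (simp add: norm_eq_sqrt_inner)
    have le: "\<bar>c0 $ 3\<bar> \<le> s" using component_le_norm_cart[of c0 3] nc0 by simp
    have "\<bar>c0 $ 3\<bar> \<noteq> s"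
    proof
      assume eq: "\<bar>c0 $ 3\<bar> = s"
      have sq: "c0$1 * c0$1 + c0$2 * c0$2 + c0$3 * c0$3 = s * s"
        using cc by (simp add: inner_vec_def sum_3)
      have "\<bar>c0$3\<bar> * \<bar>c0$3\<bar> = s * s" using eq by simp
      then have "c0$3 * c0$3 = s * s" by simp
      with sq have "c0$1 * c0$1 + c0$2 * c0$2 = 0" by simp
      then have c12: "c0$1 = 0" "c0$2 = 0"
        by (simp_all add: sum_squares_eq_zero_iff)
      have c3: "c0$3 \<noteq> 0" using eq s0 by auto
      have "\<forall>t\<in>?S. \<xi> t $ 3 = k0 / c0 $ 3"
      proof
        fix t assume t: "t \<in> ?S"
        have "\<xi> t \<bullet> c0 = k0" using xm[OF t] c0 t by auto
        then have "\<xi> t $ 3 * c0 $ 3 = k0" using c12 by (simp add: inner_vec_def sum_3)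
        then show "\<xi> t $ 3 = k0 / c0 $ 3" using c3 by (simp add: field_simps)
      qed
      then show False using zconst_false[OF order_refl ab order_refl] by blast
    qed
    with le have lt: "\<bar>- c0 $ 3\<bar> < s" by simp
    show ?thesis
    proof (intro exI conjI ballI)
      show "\<bar>- c0 $ 3\<bar> < s" by (rule lt)
      fix t assume t: "t \<in> ?S"
      show "sph_ang_mom (\<xi> t) (\<xi>' t) = k0 * \<xi> t $ 3 + - c0 $ 3"
        using Kform[of t] c0 t by simp
    qed
  qed
  show ?thesis unfolding geo
    by (rule conjI, (rule impI, rule part1[unfolded s_def], assumption),
        (rule impI, rule part2[unfolded s_def], erule conjunct1))
qed

end
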